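(* Let $X, Y, Z, W$ be vector fields on $M$. Then $$\tau\big(\Phi(Z), \nabla^{E'}_Y\Phi'(W)\big) = -\tfrac{1}{2}D_M[Z|YW],\qquad \tau\big(\Phi(Z), \nabla^{E'}_X\nabla^{E'}_Y\Phi'(W)\big) = -\tfrac{1}{2}D_M[Z|XYW].$$
   Context: Let $\mathbb{R}^{2n+1}$ have coordinates $(\mathbf{x},\mathbf{p},z)$ and contact form $\theta=dz-\sum_ip_i\,dx_i$. A quasi-Hessian manifold $M$ is obtained by gluing Legendre submanifolds $L\subset\mathbb{R}^{2n+1}$ (local models) via affine Legendre equivalences. On each local model, $\pi^e:(\mathbf{x},\mathbf{p},z)\mapsto(\mathbf{x},z)$ and $\pi^m:(\mathbf{x},\mathbf{p},z)\mapsto(\mathbf{p},z')$ with $z'=\mathbf{p}^T\mathbf{x}-z$; $E=\{(q,w):dz(w)-\mathbf{p}(q)^Td\mathbf{x}(w)=0\}\subset L\times(\mathbb{R}^n_{\mathbf{x}}\times\mathbb{R}_z)$ with $\Phi=d\pi^e:TL\to E$ and flat connection $\nabla^E$ (flat frame $s_i=\partial/\partial x_i+p_i\,\partial/\partial z$), and analogously $E'$ with $\Phi'=d\pi^m$ and flat connection $\nabla^{E'}$ (flat frame $s_i^*=\partial/\partial p_i+x_i\,\partial/\partial z'$); these glue to bundles on $M$. $\tau=\sum_i dx_i\,dp_i$ (symmetrized), $\tau(s_i,s_j^* )=\tfrac12\delta_{ij}$, and $\tau(\eta,\zeta')$ means $\tau(\eta\oplus0,0\oplus\zeta')$. The canonical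 divergence on a local model is $D(p,q)=z(p)+z'(q)-\mathbf{x}(p)^T\mathbf{p}(q)$; it is invariant under affine Legendre equivalences and defines $D_M:M\times M\to\mathbb{R}$ (locally). For a function $\rho$ on $M\times M$, $\rho[X_1\cdots X_k|Y_1\cdots Y_l](r)=(X_1)_p\cdots(X_k)_p(Y_1)_q\cdots(Y_l)_q\,\rho(p,q)\big|_{p=q=r}$. *)

theory Defs
  imports "HOL-Analysis.Analysis"
begin

text \<open>Local model of a quasi-Hessian manifold: a Legendre submanifold L of
  R^(2n+1), given by a parametrisation u |-> (X u, P u, Zc u) over an open set U of R^n.
  Functions and vector fields on L are identified with functions and vector fields on U.\<close>

fun Ck :: "nat \<Rightarrow> ('a::real_normed_vector) set \<Rightarrow> ('a \<Rightarrow> 'b::real_normed_vector) \<Rightarrow> bool" where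
  "Ck 0 S f = continuous_on S f"
| "Ck (Suc k) S f = (continuous_on S f \<and> f differentiable_on S \<and>
      (\<forall>v. Ck k S (\<lambda>u. frechet_derivative f (at u) v)))"

definition smooth_on :: "('a::real_normed_vector) set \<Rightarrow> ('a \<Rightarrow> 'b::real_normed_vector) \<Rightarrow> bool" where
  "smooth_on S f \<longleftrightarrow> (\<forall>k. Ck k S f)"

definition vfd :: "('a::real_normed_vector \<Rightarrow> 'a) \<Rightarrow> ('a \<Rightarrow> 'b::real_normed_vector) \<Rightarrow> 'a \<Rightarrow> 'b" where
  "vfd V g u = frechet_derivative g (at u) (V u)"

text \<open>Legendre submanifold given by an injective smooth immersion with theta = dz - p dx pulling back to 0.\<close>
definition legendre_param ::
  "(real^'n) set \<Rightarrow> (real^'n \<Rightarrow> real^'n) \<Rightarrow> (real^'n \<Rightarrow> real^'n) \<Rightarrow> (real^'n \<Rightarrow> real) \<Rightarrow> bool" where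
  "legendre_param U X P Zc \<longleftrightarrow> open U \<and> U \<noteq> {} \<and>
     smooth_on U X \<and> smooth_on U P \<and> smooth_on U Zc \<and>
     inj_on (\<lambda>u. (X u, P u, Zc u)) U \<and>
     (\<forall>u\<in>U. inj (frechet_derivative (\<lambda>u. (X u, P u, Zc u)) (at u))) \<and>
     (\<forall>u\<in>U. \<forall>h. frechet_derivative Zc (at u) h = P u \<bullet> frechet_derivative X (at u) h)"

definition zdual :: "(real^'n \<Rightarrow> real^'n) \<Rightarrow> (real^'n \<Rightarrow> real^'n) \<Rightarrow> (real^'n \<Rightarrow> real) \<Rightarrow> real^'n \<Rightarrow> real" where
  "zdual X P Zc u = P u \<bullet> X u - Zc u"

text \<open>Phi = d pi^e : TL -> E, values in R^n_x x R_z.\<close>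
definition Phi :: "(real^'n \<Rightarrow> real^'n) \<Rightarrow> (real^'n \<Rightarrow> real) \<Rightarrow> (real^'n \<Rightarrow> real^'n) \<Rightarrow> real^'n \<Rightarrow> (real^'n) \<times> real" where
  "Phi X Zc V u = (vfd V X u, vfd V Zc u)"

text \<open>Phi' = d pi^m : TL -> E', values in R^n_p x R_z'.\<close>
definition Phi' :: "(real^'n \<Rightarrow> real^'n) \<Rightarrow> (real^'n \<Rightarrow> real^'n) \<Rightarrow> (real^'n \<Rightarrow> real) \<Rightarrow> (real^'n \<Rightarrow> real^'n) \<Rightarrow> real^'n \<Rightarrow> (real^'n) \<times> real" where
  "Phi' X P Zc V u = (vfd V P u, vfd V (zdual X P Zc) u)"

text \<open>Flat frame of E': s_i^* = d/dp_i + x_i d/dz'.\<close>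
definition frameE' :: "(real^'n \<Rightarrow> real^'n) \<Rightarrow> 'n \<Rightarrow> real^'n \<Rightarrow> (real^'n) \<times> real" where
  "frameE' X i u = (axis i 1, X u $ i)"

text \<open>Flat connection of E': nabla_Y (sum_i c_i s_i^*) = sum_i Y(c_i) s_i^*, where c_i is
  the p_i-component of the section.\<close>
definition nablaE' :: "(real^'n \<Rightarrow> real^'n) \<Rightarrow> (real^'n \<Rightarrow> real^'n) \<Rightarrow> (real^'n \<Rightarrow> (real^'n) \<times> real) \<Rightarrow> real^'n \<Rightarrow> (real^'n) \<times> real" where
  "nablaE' X Y \<sigma> u = (\<Sum>i\<in>UNIV. vfd Y (\<lambda>v. fst (\<sigma> v) $ i) u *\<^sub>R frameE' X i u)"

text \<open>tau = sum_i dx_i dp_i (symmetrised) on E (+) E'.\<close>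
definition tau :: "((real^'n) \<times> real) \<times> ((real^'n) \<times> real) \<Rightarrow> ((real^'n) \<times> real) \<times> ((real^'n) \<times> real) \<Rightarrow> real" where
  "tau a b = (1/2) * (\<Sum>i\<in>UNIV. fst (fst a) $ i * fst (snd b) $ i + fst (fst b) $ i * fst (snd a) $ i)"

definition Dcan :: "(real^'n \<Rightarrow> real^'n) \<Rightarrow> (real^'n \<Rightarrow> real^'n) \<Rightarrow> (real^'n \<Rightarrow> real) \<Rightarrow> (real^'n) \<times> (real^'n) \<Rightarrow> real" where
  "Dcan X P Zc pq = Zc (fst pq) + zdual X P Zc (snd pq) - X (fst pq) \<bullet> P (snd pq)"

definition vf1 :: "('a::real_normed_vector \<Rightarrow> 'a) \<Rightarrow> ('a \<times> 'a \<Rightarrow> real) \<Rightarrow> 'a \<times> 'a \<Rightarrow> real" where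
  "vf1 V g pq = frechet_derivative (\<lambda>p. g (p, snd pq)) (at (fst pq)) (V (fst pq))"

definition vf2 :: "('a::real_normed_vector \<Rightarrow> 'a) \<Rightarrow> ('a \<times> 'a \<Rightarrow> real) \<Rightarrow> 'a \<times> 'a \<Rightarrow> real" where
  "vf2 V g pq = frechet_derivative (\<lambda>q. g (fst pq, q)) (at (snd pq)) (V (snd pq))"

end

theory Submission
  imports Defs
begin

lemma fd_cong:
  assumes "open S" "x \<in> S" "\<And>y. y \<in> S \<Longrightarrow> f y = g y"
  shows "frechet_derivative f (at x) = frechet_derivative g (at x)"
proof -
  have "(\<lambda>D. (f has_derivative D) (at x)) = (\<lambda>D. (g has_derivative D) (at x))"
  proof
    fix D
    show "(f has_derivative D) (at x) = (g has_derivative D) (at x)"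
      using has_derivative_transform_within_open[of f D x UNIV S g]
            has_derivative_transform_within_open[of g D x UNIV S f] assms by auto
  qed
  then show ?thesis unfolding frechet_derivative_def by simp
qed

lemma diffon_cong:
  assumes "open S" "\<And>y. y \<in> S \<Longrightarrow> f y = g y" "f differentiable_on S"
  shows "g differentiable_on S"
  using assms unfolding differentiable_on_eq_differentiable_at[OF assms(1)] differentiable_def
  using has_derivative_transform_within_open by blast

lemma Ck_cong:
  assumes "open S" "\<And>y. y \<in> S \<Longrightarrow> f y = g y"
  shows "Ck k S f = Ck k S g"
  using assms(2)
proof (induction k arbitrary: f g)
  case 0
  then show ?case using continuous_on_cong by force
next
  case (Suc k)
  have c: "continuous_on S f = continuous_on S g" using Suc.prems continuous_on_cong by force
  have d: "(f differentiable_on S) = (g differentiable_on S)"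
    using diffon_cong[OF assms(1), of f g] diffon_cong[OF assms(1), of g f] Suc.prems by auto
  have e: "Ck k S (\<lambda>u. frechet_derivative f (at u) v) = Ck k S (\<lambda>u. frechet_derivative g (at u) v)" for v
    by (rule Suc.IH) (use fd_cong[OF assms(1)] Suc.prems in metis)
  show ?case using c d e by simp
qed

lemma Ck_Suc_mono: "Ck (Suc k) S f \<Longrightarrow> Ck k S f"
proof (induction k arbitrary: f)
  case 0 then show ?case by simp
next
  case (Suc k) then show ?case by (metis Ck.simps(2))
qed

lemma Ck_cont: "Ck k S f \<Longrightarrow> continuous_on S f"
  by (cases k) auto

lemma Ck_const: "Ck k S (\<lambda>x. c)"
proof (induction k arbitrary: c)
  case 0 then show ?case by simp
next
  case (Suc k) then show ?case by (simp add: frechet_derivative_const)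
qed

lemma Ck_add:
  assumes "open S"
  shows "Ck k S f \<Longrightarrow> Ck k S g \<Longrightarrow> Ck k S (\<lambda>x. f x + g x)"
proof (induction k arbitrary: f g)
  case 0 then show ?case by (simp add: continuous_on_add)
next
  case (Suc k)
  have df: "f differentiable_on S" "g differentiable_on S" using Suc.prems by auto
  have "frechet_derivative (\<lambda>x. f x + g x) (at u) v
     = frechet_derivative f (at u) v + frechet_derivative g (at u) v" if "u \<in> S" for u v
  proof -
    have "f differentiable at u" "g differentiable at u"
      using df that differentiable_on_eq_differentiable_at[OF assms] by auto
    then have "((\<lambda>x. f x + g x) has_derivative (\<lambda>h. frechet_derivative f (at u) h + frechet_derivative g (at u) h)) (at u)"
      by (intro has_derivative_add) (auto simp: frechet_derivative_works)
    then show ?thesis by (metis frechet_derivative_at)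
  qed
  then have eq: "Ck k S (\<lambda>u. frechet_derivative (\<lambda>x. f x + g x) (at u) v)
     = Ck k S (\<lambda>u. frechet_derivative f (at u) v + frechet_derivative g (at u) v)" for v
    by (intro Ck_cong[OF assms]) simp
  have "Ck k S (\<lambda>u. frechet_derivative f (at u) v + frechet_derivative g (at u) v)" for v
    using Suc.IH Suc.prems by simp
  then have "Ck k S (\<lambda>u. frechet_derivative (\<lambda>x. f x + g x) (at u) v)" for v
    using eq by simp
  moreover have "continuous_on S (\<lambda>x. f x + g x)" using Suc.prems by (intro continuous_on_add) auto
  moreover have "(\<lambda>x. f x + g x) differentiable_on S" using df by (rule differentiable_on_add)
  ultimately show ?case unfolding Ck.simps by blast
qed

lemma Ck_linear:
  assumes "open S" "bounded_linear L"
  shows "Ck k S f \<Longrightarrow> Ck k S (\<lambda>x. L (f x))"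
proof (induction k arbitrary: f)
  case 0 then show ?case
    by (simp add: bounded_linear.continuous_on[OF assms(2)])
next
  case (Suc k)
  have df: "f differentiable_on S" using Suc.prems by auto
  have hd: "((\<lambda>x. L (f x)) has_derivative (\<lambda>h. L (frechet_derivative f (at u) h))) (at u)" if "u \<in> S" for u
  proof -
    have "f differentiable at u"
      using df that differentiable_on_eq_differentiable_at[OF assms(1)] by auto
    then show ?thesis
      by (intro bounded_linear.has_derivative[OF assms(2)]) (auto simp: frechet_derivative_works)
  qed
  then have "frechet_derivative (\<lambda>x. L (f x)) (at u) v = L (frechet_derivative f (at u) v)" if "u \<in> S" for u v
    using that by (metis frechet_derivative_at)
  then have eq: "Ck k S (\<lambda>u. frechet_derivative (\<lambda>x. L (f x)) (at u) v)
     = Ck k S (\<lambda>u. L (frechet_derivative f (at u) v))" for v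
    by (intro Ck_cong[OF assms(1)]) simp
  have "Ck k S (\<lambda>u. L (frechet_derivative f (at u) v))" for v
    using Suc.IH Suc.prems by simp
  then have "Ck k S (\<lambda>u. frechet_derivative (\<lambda>x. L (f x)) (at u) v)" for v
    using eq by simp
  moreover have "(\<lambda>x. L (f x)) differentiable_on S"
    unfolding differentiable_on_eq_differentiable_at[OF assms(1)] differentiable_def using hd by blast
  moreover have "continuous_on S (\<lambda>x. L (f x))" using Suc.prems
    by (intro bounded_linear.continuous_on[OF assms(2)]) simp
  ultimately show ?case unfolding Ck.simps by blast
qed

lemma Ck_bilinear:
  fixes f :: "'a::real_normed_vector \<Rightarrow> 'b::real_normed_vector" and g :: "'a \<Rightarrow> 'c::real_normed_vector"
    and prod :: "'b \<Rightarrow> 'c \<Rightarrow> 'd::real_normed_vector"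
  assumes "open S" "bounded_bilinear prod"
  shows "Ck k S f \<Longrightarrow> Ck k S g \<Longrightarrow> Ck k S (\<lambda>x. prod (f x) (g x))"
proof (induction k arbitrary: f g)
  case 0 then show ?case
    by (simp add: bounded_bilinear.continuous_on[OF assms(2)])
next
  case (Suc k)
  have df: "f differentiable_on S" "g differentiable_on S" using Suc.prems by auto
  have hd: "((\<lambda>x. prod (f x) (g x)) has_derivative
      (\<lambda>h. prod (f u) (frechet_derivative g (at u) h) + prod (frechet_derivative f (at u) h) (g u))) (at u)"
    if "u \<in> S" for u
  proof -
    have "f differentiable at u" "g differentiable at u"
      using df that differentiable_on_eq_differentiable_at[OF assms(1)] by auto
    then show ?thesis
      by (intro bounded_bilinear.FDERIV[OF assms(2)]) (auto simp: frechet_derivative_works)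
  qed
  then have eq: "frechet_derivative (\<lambda>x. prod (f x) (g x)) (at u) v
     = prod (f u) (frechet_derivative g (at u) v) + prod (frechet_derivative f (at u) v) (g u)"
    if "u \<in> S" for u v
    by (simp add: frechet_derivative_at[OF hd[OF that], symmetric])
  have "Ck k S (\<lambda>u. prod (f u) (frechet_derivative g (at u) v) + prod (frechet_derivative f (at u) v) (g u))" for v
  proof (rule Ck_add[OF assms(1)])
    show "Ck k S (\<lambda>u. prod (f u) (frechet_derivative g (at u) v))"
      using Suc.IH[of f "\<lambda>u. frechet_derivative g (at u) v"] Suc.prems(1,2) Ck_Suc_mono by auto
    show "Ck k S (\<lambda>u. prod (frechet_derivative f (at u) v) (g u))"
      using Suc.IH[of "\<lambda>u. frechet_derivative f (at u) v" g] Suc.prems(1,2) Ck_Suc_mono by auto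
  qed
  moreover have "Ck k S (\<lambda>u. frechet_derivative (\<lambda>x. prod (f x) (g x)) (at u) v)
     = Ck k S (\<lambda>u. prod (f u) (frechet_derivative g (at u) v) + prod (frechet_derivative f (at u) v) (g u))" for v
    by (intro Ck_cong[OF assms(1)] eq)
  ultimately have "Ck k S (\<lambda>u. frechet_derivative (\<lambda>x. prod (f x) (g x)) (at u) v)" for v
    by simp
  moreover have "(\<lambda>x. prod (f x) (g x)) differentiable_on S"
    unfolding differentiable_on_eq_differentiable_at[OF assms(1)] differentiable_def using hd by blast
  moreover have "continuous_on S (\<lambda>x. prod (f x) (g x))"
    using bounded_bilinear.continuous_on[OF assms(2) Ck_cont[OF Suc.prems(1)] Ck_cont[OF Suc.prems(2)]] .
  ultimately show ?case unfolding Ck.simps by blast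
qed


lemma smooth_hasd:
  assumes "open S" "smooth_on S f" "x \<in> S"
  shows "(f has_derivative frechet_derivative f (at x)) (at x)"
proof -
  have "Ck (Suc 0) S f" using assms(2) unfolding smooth_on_def by blast
  then have "f differentiable_on S" by simp
  then have "f differentiable at x"
    using assms differentiable_on_eq_differentiable_at by blast
  then show ?thesis by (simp add: frechet_derivative_works)
qed

lemma smooth_dir: "smooth_on S f \<Longrightarrow> smooth_on S (\<lambda>u. frechet_derivative f (at u) v)"
  unfolding smooth_on_def
proof
  fix k assume "\<forall>k. Ck k S f"
  then have "Ck (Suc k) S f" by blast
  then show "Ck k S (\<lambda>u. frechet_derivative f (at u) v)" by simp
qed

lemma smooth_cong: "open S \<Longrightarrow> (\<And>y. y \<in> S \<Longrightarrow> f y = g y) \<Longrightarrow> smooth_on S f \<Longrightarrow> smooth_on S g"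
  unfolding smooth_on_def using Ck_cong by blast

lemma smooth_const: "smooth_on S (\<lambda>x. c)"
  unfolding smooth_on_def using Ck_const by blast

lemma smooth_add: "open S \<Longrightarrow> smooth_on S f \<Longrightarrow> smooth_on S g \<Longrightarrow> smooth_on S (\<lambda>x. f x + g x)"
  unfolding smooth_on_def using Ck_add by blast

lemma smooth_linear: "open S \<Longrightarrow> bounded_linear L \<Longrightarrow> smooth_on S f \<Longrightarrow> smooth_on S (\<lambda>x. L (f x))"
  unfolding smooth_on_def using Ck_linear by blast

lemma smooth_bilinear:
  fixes f :: "'a::real_normed_vector \<Rightarrow> 'b::real_normed_vector" and g :: "'a \<Rightarrow> 'c::real_normed_vector"
    and prod :: "'b \<Rightarrow> 'c \<Rightarrow> 'd::real_normed_vector"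
  shows "open S \<Longrightarrow> bounded_bilinear prod \<Longrightarrow> smooth_on S f \<Longrightarrow> smooth_on S g \<Longrightarrow> smooth_on S (\<lambda>x. prod (f x) (g x))"
  unfolding smooth_on_def using Ck_bilinear by blast

lemma smooth_diff: "open S \<Longrightarrow> smooth_on S f \<Longrightarrow> smooth_on S g \<Longrightarrow> smooth_on S (\<lambda>x. f x - g x)"
proof -
  assume a: "open S" "smooth_on S f" "smooth_on S g"
  have "smooth_on S (\<lambda>x. - g x)"
    using smooth_linear[OF a(1) bounded_linear_minus[OF bounded_linear_ident] a(3)] by simp
  then have "smooth_on S (\<lambda>x. f x + - g x)" using smooth_add a by blast
  then show ?thesis by simp
qed

lemma smooth_sum:
  assumes "open S" "finite I" "\<And>i. i \<in> I \<Longrightarrow> smooth_on S (f i)"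
  shows "smooth_on S (\<lambda>x. \<Sum>i\<in>I. f i x)"
  using assms(2,3)
proof (induction I rule: finite_induct)
  case empty then show ?case by (simp add: smooth_const)
next
  case (insert a F)
  then show ?case by (simp add: smooth_add[OF assms(1)])
qed

lemma linear_expand:
  fixes L :: "real^'n \<Rightarrow> 'b::real_vector"
  assumes "linear L"
  shows "L h = (\<Sum>j\<in>UNIV. (h $ j) *\<^sub>R L (axis j 1))"
proof -
  have "L h = L (\<Sum>j\<in>UNIV. h $ j *\<^sub>R axis j 1)"
    using basis_expansion[of h] by (simp add: scalar_mult_eq_scaleR)
  also have "\<dots> = (\<Sum>j\<in>UNIV. (h $ j) *\<^sub>R L (axis j 1))"
    by (simp add: linear_sum[OF assms] linear_scale[OF assms])
  finally show ?thesis .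
qed

lemma smooth_vfd:
  fixes V :: "real^'n \<Rightarrow> real^'n" and f :: "real^'n \<Rightarrow> 'b::real_normed_vector"
  assumes "open S" "smooth_on S V" "smooth_on S f"
  shows "smooth_on S (vfd V f)"
proof -
  have eq: "(\<Sum>j\<in>UNIV. (V u $ j) *\<^sub>R frechet_derivative f (at u) (axis j 1)) = vfd V f u"
    if "u \<in> S" for u
  proof -
    have "linear (frechet_derivative f (at u))"
      using smooth_hasd[OF assms(1,3) that] has_derivative_linear by blast
    then show ?thesis unfolding vfd_def by (rule linear_expand[symmetric])
  qed
  have sm: "smooth_on S (\<lambda>u. \<Sum>j\<in>UNIV. (V u $ j) *\<^sub>R frechet_derivative f (at u) (axis j 1))"
  proof (rule smooth_sum[OF assms(1)])
    fix j :: 'n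
    have "smooth_on S (\<lambda>u. V u $ j)"
      by (rule smooth_linear[OF assms(1) bounded_linear_vec_nth assms(2)])
    moreover have "smooth_on S (\<lambda>u. frechet_derivative f (at u) (axis j 1))"
      by (rule smooth_dir[OF assms(3)])
    ultimately show "smooth_on S (\<lambda>u. (V u $ j) *\<^sub>R frechet_derivative f (at u) (axis j 1))"
      by (rule smooth_bilinear[where prod="scaleR" and f="\<lambda>u. V u $ j"
          and g="\<lambda>u. frechet_derivative f (at u) (axis j 1)", OF assms(1) bounded_bilinear_scaleR])
  qed simp
  show ?thesis by (rule smooth_cong[where g="vfd V f", OF assms(1) eq sm])
qed

lemma vfd_comp:
  fixes B :: "real^'n \<Rightarrow> real^'n"
  assumes "(B has_derivative frechet_derivative B (at u)) (at u)"
  shows "vfd Y (\<lambda>v. B v $ i) u = vfd Y B u $ i"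
proof -
  have "((\<lambda>v. B v $ i) has_derivative (\<lambda>h. frechet_derivative B (at u) h $ i)) (at u)"
    by (rule bounded_linear.has_derivative[OF bounded_linear_vec_nth assms])
  from frechet_derivative_at[OF this, symmetric] show ?thesis unfolding vfd_def by simp
qed

lemma fst_nabla: "fst (nablaE' X Y \<sigma> u) = (\<chi> i. vfd Y (\<lambda>v. fst (\<sigma> v) $ i) u)"
  unfolding nablaE'_def frameE'_def
  by (simp add: fst_sum vec_eq_iff axis_def if_distrib cong: if_cong)

lemma vf2_step:
  fixes X B :: "real^'n \<Rightarrow> real^'n" and A :: "real^'n \<Rightarrow> 'c::real_inner" and F :: "(real^'n) \<times> (real^'n) \<Rightarrow> real"
  assumes "open U" "q \<in> U" "smooth_on U A" "smooth_on U B"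
    and "\<And>q. q \<in> U \<Longrightarrow> F (p, q) = c + A q \<bullet> e - X p \<bullet> B q"
  shows "vf2 Y F (p, q) = vfd Y A q \<bullet> e - X p \<bullet> vfd Y B q"
proof -
  have "vf2 Y F (p, q) = frechet_derivative (\<lambda>q'. F (p, q')) (at q) (Y q)"
    unfolding vf2_def by simp
  also have "\<dots> = frechet_derivative (\<lambda>q'. c + A q' \<bullet> e - X p \<bullet> B q') (at q) (Y q)"
    using fd_cong[OF assms(1,2), of "\<lambda>q'. F (p, q')"] assms(5) by simp
  also have "\<dots> = frechet_derivative A (at q) (Y q) \<bullet> e - X p \<bullet> frechet_derivative B (at q) (Y q)"
  proof -
    have "((\<lambda>q'. c + A q' \<bullet> e - X p \<bullet> B q') has_derivative
       (\<lambda>h. 0 + frechet_derivative A (at q) h \<bullet> e - X p \<bullet> frechet_derivative B (at q) h)) (at q)"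
      by (intro has_derivative_diff has_derivative_add has_derivative_const
          has_derivative_inner_left has_derivative_inner_right
          smooth_hasd[OF assms(1,3,2)] smooth_hasd[OF assms(1,4,2)])
    from frechet_derivative_at[OF this, symmetric] show ?thesis by simp
  qed
  finally show ?thesis unfolding vfd_def .
qed

lemma vf1_final:
  fixes X B :: "real^'n \<Rightarrow> real^'n" and F :: "(real^'n) \<times> (real^'n) \<Rightarrow> real"
  assumes "open U" "r \<in> U" "smooth_on U X"
    and "\<And>p. F (p, r) = a - X p \<bullet> b"
  shows "vf1 Z F (r, r) = - (vfd Z X r \<bullet> b)"
proof -
  have "vf1 Z F (r, r) = frechet_derivative (\<lambda>p. a - X p \<bullet> b) (at r) (Z r)"
    unfolding vf1_def using assms(4) by simp
  also have "\<dots> = - (frechet_derivative X (at r) (Z r) \<bullet> b)"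
  proof -
    have "((\<lambda>p. a - X p \<bullet> b) has_derivative (\<lambda>h. 0 - frechet_derivative X (at r) h \<bullet> b)) (at r)"
      by (intro has_derivative_diff has_derivative_const
          has_derivative_inner_left smooth_hasd[OF assms(1,3,2)])
    from frechet_derivative_at[OF this, symmetric] show ?thesis by simp
  qed
  finally show ?thesis unfolding vfd_def .
qed


lemma sum_inner: "(\<Sum>i\<in>UNIV. (a::real^'n) $ i * b $ i) = a \<bullet> b"
  by (simp add: inner_vec_def)

theorem theorem4p2:
  fixes U :: "(real^'n) set"
    and X P :: "real^'n \<Rightarrow> real^'n" and Zc :: "real^'n \<Rightarrow> real"
    and VX VY VZ VW :: "real^'n \<Rightarrow> real^'n"
    and r :: "real^'n"
  assumes "legendre_param U X P Zc"
    and "smooth_on U VX" and "smooth_on U VY" and "smooth_on U VZ" and "smooth_on U VW"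
    and "r \<in> U"
  shows "tau (Phi X Zc VZ r, 0) (0, nablaE' X VY (Phi' X P Zc VW) r)
           = -(1/2) * vf1 VZ (vf2 VY (vf2 VW (Dcan X P Zc))) (r, r)
         \<and> tau (Phi X Zc VZ r, 0) (0, nablaE' X VX (nablaE' X VY (Phi' X P Zc VW)) r)
           = -(1/2) * vf1 VZ (vf2 VX (vf2 VY (vf2 VW (Dcan X P Zc)))) (r, r)"
proof -
  have oU: "open U" and sX: "smooth_on U X" and sP: "smooth_on U P" and sZ: "smooth_on U Zc"
    using assms(1) unfolding legendre_param_def by auto
  define G where "G = zdual X P Zc"
  have Gd: "G = (\<lambda>u. P u \<bullet> X u - Zc u)" unfolding G_def by (rule ext) (simp add: zdual_def)
  have sG: "smooth_on U G" unfolding Gd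
    by (intro smooth_diff[OF oU] smooth_bilinear[OF oU bounded_bilinear_inner] sX sP sZ)
  define A1 where "A1 = vfd VW G"
  define B1 where "B1 = vfd VW P"
  define A2 where "A2 = vfd VY A1"
  define B2 where "B2 = vfd VY B1"
  define A3 where "A3 = vfd VX A2"
  define B3 where "B3 = vfd VX B2"
  have sA1: "smooth_on U A1" unfolding A1_def by (rule smooth_vfd[OF oU assms(5) sG])
  have sB1: "smooth_on U B1" unfolding B1_def by (rule smooth_vfd[OF oU assms(5) sP])
  have sA2: "smooth_on U A2" unfolding A2_def by (rule smooth_vfd[OF oU assms(3) sA1])
  have sB2: "smooth_on U B2" unfolding B2_def by (rule smooth_vfd[OF oU assms(3) sB1])
  define F1 where "F1 = vf2 VW (Dcan X P Zc)"
  define F2 where "F2 = vf2 VY F1"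
  define F3 where "F3 = vf2 VX F2"
  have F1: "F1 (p, q) = A1 q \<bullet> 1 - X p \<bullet> B1 q" if "q \<in> U" for p q
    unfolding F1_def A1_def B1_def
    by (rule vf2_step[OF oU that sG sP, where c="Zc p"]) (simp add: Dcan_def G_def)
  have F2: "F2 (p, q) = A2 q \<bullet> 1 - X p \<bullet> B2 q" if "q \<in> U" for p q
    unfolding F2_def A2_def B2_def
    by (rule vf2_step[OF oU that sA1 sB1, where c=0]) (simp add: F1)
  have F3: "F3 (p, q) = A3 q \<bullet> 1 - X p \<bullet> B3 q" if "q \<in> U" for p q
    unfolding F3_def A3_def B3_def
    by (rule vf2_step[OF oU that sA2 sB2, where c=0]) (simp add: F2)
  have R1: "vf1 VZ F2 (r, r) = - (vfd VZ X r \<bullet> B2 r)"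
    by (rule vf1_final[OF oU assms(6) sX]) (rule F2[OF assms(6)])
  have R2: "vf1 VZ F3 (r, r) = - (vfd VZ X r \<bullet> B3 r)"
    by (rule vf1_final[OF oU assms(6) sX]) (rule F3[OF assms(6)])
  define N1 where "N1 = nablaE' X VY (Phi' X P Zc VW)"
  have N1: "fst (N1 u) = B2 u" if "u \<in> U" for u
    unfolding N1_def fst_nabla B2_def
    by (simp add: vec_eq_iff Phi'_def B1_def[symmetric] vfd_comp[OF smooth_hasd[OF oU sB1 that]])
  have N2: "fst (nablaE' X VX N1 r) = B3 r"
  proof -
    have "vfd VX (\<lambda>v. fst (N1 v) $ i) r = vfd VX (\<lambda>v. B2 v $ i) r" for i
      unfolding vfd_def using fd_cong[OF oU assms(6), of "\<lambda>v. fst (N1 v) $ i" "\<lambda>v. B2 v $ i"] N1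
      by simp
    then show ?thesis unfolding fst_nabla B3_def
      by (simp add: vec_eq_iff vfd_comp[OF smooth_hasd[OF oU sB2 assms(6)]])
  qed
  show ?thesis
    unfolding F1_def[symmetric] F2_def[symmetric] F3_def[symmetric] N1_def[symmetric] R1 R2
    by (simp add: tau_def Phi_def N2 N1[OF assms(6)] sum_inner)
qed

end
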